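(* Let $X$, $\mathcal{B}$, $\Delta$, $\mathcal{D}(\mathcal{B})$ and $\mu\mapsto\hat\mu$ be as in the context (in particular $\mathcal{B}$ vanishes nowhere on $X$). Let $\mu\in\mathcal{D}(\mathcal{B})$ and $f\in\mathcal{B}$. Then $f=0$ $\mu$-almost everywhere on $X$ if and only if $\hat f=0$ $\hat\mu$-almost everywhere on $\Delta$.
   Context: $X$ is a nonempty set and $\mathcal{B}$ is a real vector space of bounded functions $X\to\mathbb{R}$ closed under pointwise multiplication, pointwise max and min, with $f\wedge1\in\mathcal{B}$ for $f\in\mathcal{B}$. Assume that for every $x\in X$ there is $f\in\mathcal{B}$ with $f(x)\neq0$. $A(\mathcal{B})$ is the supremum-norm closure of $\mathcal{B}+i\mathcal{B}$, a commutative $C^\ast$-algebra; $\Delta$ is its spectrum (nonzero continuous multiplicative linear functionals with the Gelfand topology), locally compact Hausdorff; $\hat a(\varphi)=\varphi(a)$ is the Gelfand transform, an isometric $^\ast$-isomorphism $A(\mathcal{B})\to C_0(\Delta)$; $\hat f\geq0$ iff $f$ is real-valued and $\geq0$. $\sigma(\mathcal{B})$ is the $\sigma$-ring generated by $\mathcal{B}$, and $\mathcal{D}(\mathcal{B})$ is the set of nonnegative measures $\mu$ on $\sigma(\mathcal{B})$ such that every $f\in\mathcal{B}$ is $\mu$-integrable. For $\mu\in\mathcal{D}(\mathcal{B})$: set $I(f)=\int_Xf\,d\mu$ for $f\in\mathcal{B}$; for nonnegative real-valued $f\in A(\mathcal{B})$ set $I(f)=\sup_nI(f_n)$ for any increasing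 sequence $(f_n)$ of nonnegative functions in $\mathcal{B}$ converging pointwise to $f$; set $\hat I(\hat f):=I(f)$ for nonnegative $\hat f\in C_0(\Delta)$; $\hat\mu$ is the unique nonnegative Radon measure on $\Delta$ with $\int_\Delta\hat g\,d\hat\mu=\hat I(\hat g)$ for all nonnegative $\hat g\in C_c(\Delta)$. *)

theory Defs
  imports "HOL-Analysis.Analysis"
begin

definition admissible_B :: "('x \<Rightarrow> real) set \<Rightarrow> bool" where
  "admissible_B B \<longleftrightarrow>
     (\<lambda>x. 0) \<in> B
   \<and> (\<forall>f\<in>B. \<forall>g\<in>B. (\<lambda>x. f x + g x) \<in> B)
   \<and> (\<forall>f\<in>B. \<forall>c::real. (\<lambda>x. c * f x) \<in> B)
   \<and> (\<forall>f\<in>B. \<exists>C. \<forall>x. \<bar>f x\<bar> \<le> C)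
   \<and> (\<forall>f\<in>B. \<forall>g\<in>B. (\<lambda>x. f x * g x) \<in> B)
   \<and> (\<forall>f\<in>B. \<forall>g\<in>B. (\<lambda>x. max (f x) (g x)) \<in> B)
   \<and> (\<forall>f\<in>B. \<forall>g\<in>B. (\<lambda>x. min (f x) (g x)) \<in> B)
   \<and> (\<forall>f\<in>B. (\<lambda>x. min (f x) 1) \<in> B)"

definition vanishes_nowhere :: "('x \<Rightarrow> real) set \<Rightarrow> bool" where
  "vanishes_nowhere B \<longleftrightarrow> (\<forall>x. \<exists>f\<in>B. f x \<noteq> 0)"

definition algA :: "('x \<Rightarrow> real) set \<Rightarrow> ('x \<Rightarrow> complex) set" where
  "algA B = {a. \<forall>e>0. \<exists>f\<in>B. \<exists>g\<in>B.
                  \<forall>x. cmod (a x - (complex_of_real (f x) + \<i> * complex_of_real (g x))) \<le> e}"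

text \<open>Spectrum: nonzero continuous multiplicative linear functionals on A(B),
  represented as functions on A(B) which are undefined outside A(B).\<close>
definition spectrum_A :: "('x \<Rightarrow> real) set \<Rightarrow> (('x \<Rightarrow> complex) \<Rightarrow> complex) set" where
  "spectrum_A B = {\<phi>.
      (\<forall>a. a \<notin> algA B \<longrightarrow> \<phi> a = undefined)
    \<and> (\<forall>a\<in>algA B. \<forall>b\<in>algA B. \<phi> (\<lambda>x. a x + b x) = \<phi> a + \<phi> b)
    \<and> (\<forall>a\<in>algA B. \<forall>c::complex. \<phi> (\<lambda>x. c * a x) = c * \<phi> a)
    \<and> (\<forall>a\<in>algA B. \<forall>b\<in>algA B. \<phi> (\<lambda>x. a x * b x) = \<phi> a * \<phi> b)
    \<and> (\<exists>C. \<forall>a\<in>algA B. cmod (\<phi> a) \<le> C * (SUP x. cmod (a x)))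
    \<and> (\<exists>a\<in>algA B. \<phi> a \<noteq> 0)}"

text \<open>Gelfand topology: the weak-star topology, i.e. the topology induced from the
  product topology of pointwise convergence on A(B).\<close>
definition gelfand_top :: "('x \<Rightarrow> real) set \<Rightarrow> (('x \<Rightarrow> complex) \<Rightarrow> complex) topology" where
  "gelfand_top B = subtopology (product_topology (\<lambda>_. euclidean) (algA B)) (spectrum_A B)"

definition gelfand_hat :: "('x \<Rightarrow> complex) \<Rightarrow> (('x \<Rightarrow> complex) \<Rightarrow> complex) \<Rightarrow> complex" where
  "gelfand_hat a = (\<lambda>\<phi>. \<phi> a)"

definition borel_of_top :: "'a topology \<Rightarrow> 'a measure" where
  "borel_of_top T = sigma (topspace T) {U. openin T U}"

definition radon_measure :: "'a topology \<Rightarrow> 'a measure \<Rightarrow> bool" where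
  "radon_measure T \<nu> \<longleftrightarrow>
     sets \<nu> = sets (borel_of_top T) \<and> space \<nu> = topspace T
   \<and> (\<forall>K. compactin T K \<longrightarrow> emeasure \<nu> K < \<infinity>)
   \<and> (\<forall>E\<in>sets \<nu>. emeasure \<nu> E = (INF U\<in>{U. openin T U \<and> E \<subseteq> U}. emeasure \<nu> U))
   \<and> (\<forall>U. openin T U \<longrightarrow> emeasure \<nu> U = (SUP K\<in>{K. compactin T K \<and> K \<subseteq> U}. emeasure \<nu> K))"

text \<open>sigma(B): generated by the sets f^{-1}(E), E Borel with 0 not in E. Measures on the
  sigma-ring sigma(B) are represented by measures on the sigma-algebra it generates on X.\<close>
definition sigmaB_sets :: "('x \<Rightarrow> real) set \<Rightarrow> 'x set set" where
  "sigmaB_sets B = sigma_sets UNIV {f -` E | f E. f \<in> B \<and> E \<in> sets borel \<and> (0::real) \<notin> E}"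

definition D_B :: "('x \<Rightarrow> real) set \<Rightarrow> 'x measure set" where
  "D_B B = {\<mu>. space \<mu> = UNIV \<and> sets \<mu> = sigmaB_sets B \<and> (\<forall>f\<in>B. integrable \<mu> f)}"

definition I_ext :: "('x \<Rightarrow> real) set \<Rightarrow> 'x measure \<Rightarrow> ('x \<Rightarrow> real) \<Rightarrow> ennreal" where
  "I_ext B \<mu> f = (SOME r. \<exists>fs. (\<forall>n. fs n \<in> B \<and> (\<forall>x. 0 \<le> fs n x)) \<and> incseq fs
        \<and> (\<forall>x. (\<lambda>n. fs n x) \<longlonglongrightarrow> f x)
        \<and> r = (SUP n. \<integral>\<^sup>+ x. ennreal (fs n x) \<partial>\<mu>))"

text \<open>mu-hat: the Radon measure on Delta representing I-hat on nonnegative C_c(Delta).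
  (Every element of C_0(Delta) is the Gelfand transform of a unique element of A(B).)\<close>
definition represents_hat :: "('x \<Rightarrow> real) set \<Rightarrow> 'x measure \<Rightarrow> (('x \<Rightarrow> complex) \<Rightarrow> complex) measure \<Rightarrow> bool" where
  "represents_hat B \<mu> \<nu> \<longleftrightarrow>
     radon_measure (gelfand_top B) \<nu>
   \<and> (\<forall>f\<in>algA B.
        (\<forall>\<phi>\<in>spectrum_A B. gelfand_hat f \<phi> \<in> \<real> \<and> 0 \<le> Re (gelfand_hat f \<phi>))
      \<and> compactin (gelfand_top B)
          (gelfand_top B closure_of {\<phi>\<in>spectrum_A B. gelfand_hat f \<phi> \<noteq> 0})
      \<longrightarrow> (\<integral>\<^sup>+ \<phi>. ennreal (Re (gelfand_hat f \<phi>)) \<partial>\<nu>) = I_ext B \<mu> (\<lambda>x. Re (f x)))"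

end

theory Submission
  imports Defs
begin


lemma admD:
  assumes "admissible_B B"
  shows "(\<lambda>x. 0) \<in> B" "\<And>f g. f\<in>B \<Longrightarrow> g\<in>B \<Longrightarrow> (\<lambda>x. f x + g x) \<in> B"
    "\<And>f c. f\<in>B \<Longrightarrow> (\<lambda>x. c * f x) \<in> B"
    "\<And>f. f\<in>B \<Longrightarrow> \<exists>C. \<forall>x. \<bar>f x\<bar> \<le> C"
    "\<And>f g. f\<in>B \<Longrightarrow> g\<in>B \<Longrightarrow> (\<lambda>x. f x * g x) \<in> B"
    "\<And>f g. f\<in>B \<Longrightarrow> g\<in>B \<Longrightarrow> (\<lambda>x. max (f x) (g x)) \<in> B"
    "\<And>f g. f\<in>B \<Longrightarrow> g\<in>B \<Longrightarrow> (\<lambda>x. min (f x) (g x)) \<in> B"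
    "\<And>f. f\<in>B \<Longrightarrow> (\<lambda>x. min (f x) 1) \<in> B"
  using assms unfolding admissible_B_def by blast+

lemma ofreal_algA:
  assumes "admissible_B B" "u \<in> B"
  shows "(\<lambda>x. complex_of_real (u x)) \<in> algA B"
  unfolding algA_def
proof (intro CollectI allI impI)
  fix e :: real assume "e > 0"
  show "\<exists>f\<in>B. \<exists>g\<in>B. \<forall>x. cmod (complex_of_real (u x) - (complex_of_real (f x) + \<i> * complex_of_real (g x))) \<le> e"
    using assms admD(1)[OF assms(1)] \<open>e>0\<close> by (intro bexI[of _ u] bexI[of _ "\<lambda>x. 0"]) auto
qed

lemma algA_approx:
  assumes "a \<in> algA B" "e > 0"
  shows "\<exists>f\<in>B. \<exists>g\<in>B. \<forall>x. cmod (a x - (complex_of_real (f x) + \<i> * complex_of_real (g x))) \<le> e"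
  using assms unfolding algA_def by simp

lemma algA_bounded:
  assumes "admissible_B B" "a \<in> algA B"
  shows "\<exists>M. \<forall>x. cmod (a x) \<le> M"
proof -
  obtain f g where fg: "f\<in>B" "g\<in>B" "\<forall>x. cmod (a x - (complex_of_real (f x) + \<i> * complex_of_real (g x))) \<le> 1"
  proof -
    have "\<forall>e>0. \<exists>f\<in>B. \<exists>g\<in>B. \<forall>x. cmod (a x - (complex_of_real (f x) + \<i> * complex_of_real (g x))) \<le> e"
      using assms(2) unfolding algA_def by simp
    then show ?thesis using that by (metis zero_less_one)
  qed
  obtain C1 where C1: "\<forall>x. \<bar>f x\<bar> \<le> C1" using admD(4)[OF assms(1) fg(1)] by blast
  obtain C2 where C2: "\<forall>x. \<bar>g x\<bar> \<le> C2" using admD(4)[OF assms(1) fg(2)] by blast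
  have "cmod (a x) \<le> 1 + C1 + C2" for x
  proof -
    have "cmod (a x) \<le> cmod (a x - (complex_of_real (f x) + \<i> * complex_of_real (g x)))
          + cmod (complex_of_real (f x) + \<i> * complex_of_real (g x))"
      using norm_triangle_ineq[of "a x - (complex_of_real (f x) + \<i> * complex_of_real (g x))" "complex_of_real (f x) + \<i> * complex_of_real (g x)"] by simp
    also have "\<dots> \<le> 1 + (\<bar>f x\<bar> + \<bar>g x\<bar>)"
    proof -
      have "cmod (complex_of_real (f x) + \<i> * complex_of_real (g x)) \<le> \<bar>f x\<bar> + \<bar>g x\<bar>"
        using norm_triangle_ineq[of "complex_of_real (f x)" "\<i> * complex_of_real (g x)"]
        by (simp add: norm_mult)
      then show ?thesis using fg(3)[rule_format, of x] by linarith
    qed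
    finally show ?thesis using C1[rule_format, of x] C2[rule_format, of x] by linarith
  qed
  then show ?thesis by blast
qed

lemma algA_mult:
  assumes adm: "admissible_B B" and a: "a \<in> algA B" and b: "b \<in> algA B"
  shows "(\<lambda>x. a x * b x) \<in> algA B"
  unfolding algA_def
proof (intro CollectI allI impI)
  fix e :: real assume e: "e > 0"
  obtain Ma where Ma: "\<forall>x. cmod (a x) \<le> Ma" using algA_bounded[OF adm a] by blast
  obtain Mb where Mb: "\<forall>x. cmod (b x) \<le> Mb" using algA_bounded[OF adm b] by blast
  have Ma0: "Ma \<ge> 0" using Ma norm_ge_zero order_trans by blast
  have Mb0: "Mb \<ge> 0" using Mb norm_ge_zero order_trans by blast
  define d where "d = min 1 (e / (Ma + Mb + 1))"
  have d1: "d > 0" "d \<le> 1" "d \<le> e / (Ma + Mb + 1)"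
    using e Ma0 Mb0 by (auto simp: d_def)
  have d: "d > 0" "d \<le> 1" "d * (Ma + Mb + 1) \<le> e"
    using d1 Ma0 Mb0 by (auto simp: pos_le_divide_eq)
  obtain f1 g1 where fg1: "f1\<in>B" "g1\<in>B" "\<forall>x. cmod (a x - (complex_of_real (f1 x) + \<i> * complex_of_real (g1 x))) \<le> d"
    using algA_approx[OF a d(1)] by blast
  obtain f2 g2 where fg2: "f2\<in>B" "g2\<in>B" "\<forall>x. cmod (b x - (complex_of_real (f2 x) + \<i> * complex_of_real (g2 x))) \<le> d"
    using algA_approx[OF b d(1)] by blast
  define F where "F = (\<lambda>x. f1 x * f2 x + (-1) * (g1 x * g2 x))"
  define G where "G = (\<lambda>x. f1 x * g2 x + g1 x * f2 x)"
  have FB: "F \<in> B" unfolding F_def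
    by (intro admD(2)[OF adm] admD(3)[OF adm] admD(5)[OF adm] fg1 fg2)
  have GB: "G \<in> B" unfolding G_def
    by (intro admD(2)[OF adm] admD(5)[OF adm] fg1 fg2)
  have "cmod (a x * b x - (complex_of_real (F x) + \<i> * complex_of_real (G x))) \<le> e" for x
  proof -
    define p where "p = complex_of_real (f1 x) + \<i> * complex_of_real (g1 x)"
    define q where "q = complex_of_real (f2 x) + \<i> * complex_of_real (g2 x)"
    have pq: "complex_of_real (F x) + \<i> * complex_of_real (G x) = p * q"
      unfolding p_def q_def F_def G_def by (simp add: algebra_simps complex_eq_iff)
    have ap: "cmod (a x - p) \<le> d" and bq: "cmod (b x - q) \<le> d" using fg1 fg2 p_def q_def by auto
    have qb: "cmod q \<le> Mb + 1"
    proof -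
      have "cmod q \<le> cmod (b x) + cmod (q - b x)" using norm_triangle_ineq[of "b x" "q - b x"] by simp
      then show ?thesis using Mb[rule_format, of x] bq d norm_minus_commute[of q "b x"] by linarith
    qed
    have "a x * b x - p * q = a x * (b x - q) + (a x - p) * q" by (simp add: algebra_simps)
    then have "cmod (a x * b x - p * q) \<le> cmod (a x) * cmod (b x - q) + cmod (a x - p) * cmod q"
      using norm_triangle_ineq[of "a x * (b x - q)" "(a x - p) * q"] by (simp add: norm_mult)
    also have "\<dots> \<le> Ma * d + d * (Mb + 1)"
      by (intro add_mono mult_mono) (use Ma Ma0 Mb0 ap bq qb d in auto)
    also have "\<dots> \<le> e" using d by (simp add: algebra_simps)
    finally show ?thesis using pq by simp
  qed
  then show "\<exists>f\<in>B. \<exists>g\<in>B. \<forall>x. cmod (a x * b x - (complex_of_real (f x) + \<i> * complex_of_real (g x))) \<le> e"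
    using FB GB by blast
qed




lemma specD:
  assumes "\<phi> \<in> spectrum_A B"
  shows "\<And>a b. a\<in>algA B \<Longrightarrow> b\<in>algA B \<Longrightarrow> \<phi> (\<lambda>x. a x + b x) = \<phi> a + \<phi> b"
    "\<And>a c. a\<in>algA B \<Longrightarrow> \<phi> (\<lambda>x. c * a x) = c * \<phi> a"
    "\<And>a b. a\<in>algA B \<Longrightarrow> b\<in>algA B \<Longrightarrow> \<phi> (\<lambda>x. a x * b x) = \<phi> a * \<phi> b"
    "\<exists>C. \<forall>a\<in>algA B. cmod (\<phi> a) \<le> C * (SUP x. cmod (a x))"
    "\<And>a. a \<notin> algA B \<Longrightarrow> \<phi> a = undefined"
  using assms unfolding spectrum_A_def by blast+

lemma pow_bound_lemma:
  fixes z c K :: real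
  assumes "z \<ge> 0" "c \<ge> 0" "\<And>n. z ^ Suc n \<le> K * c ^ Suc n"
  shows "z \<le> c"
proof (rule ccontr)
  assume "\<not> z \<le> c"
  then have zc: "z > c" by simp
  show False
  proof (cases "c = 0")
    case True
    then show False using assms(3)[of 0] zc by simp
  next
    case False
    then have c0: "c > 0" using assms(2) by simp
    define r where "r = z / c"
    have r1: "r > 1" using zc c0 by (simp add: r_def)
    obtain n where n: "K < r ^ n" using real_arch_pow[OF r1] by blast
    have "z ^ Suc n = r ^ Suc n * c ^ Suc n" using c0 by (simp add: r_def power_divide)
    then have "r ^ Suc n * c ^ Suc n \<le> K * c ^ Suc n" using assms(3)[of n] by simp
    then have "r ^ Suc n \<le> K" using c0 by simp
    moreover have "r ^ n \<le> r ^ Suc n" using r1 by simp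
    ultimately show False using n by simp
  qed
qed

lemma spec_bound:
  assumes adm: "admissible_B B" and phi: "\<phi> \<in> spectrum_A B" and a: "a \<in> algA B"
    and c: "\<And>x. cmod (a x) \<le> c"
  shows "cmod (\<phi> a) \<le> c"
proof -
  obtain C where C: "\<forall>a\<in>algA B. cmod (\<phi> a) \<le> C * (SUP x. cmod (a x))"
    using specD(4)[OF phi] by blast
  have c0: "c \<ge> 0" using c[of undefined] norm_ge_zero order_trans by blast
  define p where "p n = (\<lambda>x. a x ^ Suc n)" for n
  have pA: "p n \<in> algA B" for n
  proof (induction n)
    case 0 then show ?case using a by (simp add: p_def)
  next
    case (Suc n)
    have "p (Suc n) = (\<lambda>x. a x * p n x)" by (simp add: p_def)
    then show ?case using algA_mult[OF adm a Suc] by simp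
  qed
  have pphi: "\<phi> (p n) = \<phi> a ^ Suc n" for n
  proof (induction n)
    case 0 then show ?case by (simp add: p_def)
  next
    case (Suc n)
    have "p (Suc n) = (\<lambda>x. a x * p n x)" by (simp add: p_def)
    then show ?case using specD(3)[OF phi a pA[of n]] Suc by simp
  qed
  have "cmod (\<phi> a) ^ Suc n \<le> max C 0 * c ^ Suc n" for n
  proof -
    have pt: "cmod (p n x) \<le> c ^ Suc n" for x
      unfolding p_def norm_power by (intro power_mono c norm_ge_zero)
    have S: "(SUP x. cmod (p n x)) \<le> c ^ Suc n"
      by (rule cSUP_least) (use pt in auto)
    have bdd: "bdd_above (range (\<lambda>x. cmod (p n x)))" using pt by (intro bdd_aboveI2) auto
    have S0: "0 \<le> (SUP x. cmod (p n x))"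
      by (rule order_trans[OF norm_ge_zero cSUP_upper[OF UNIV_I bdd]])
    have "cmod (\<phi> a) ^ Suc n = cmod (\<phi> (p n))" by (simp only: pphi norm_power)
    also have "\<dots> \<le> C * (SUP x. cmod (p n x))" using C pA[of n] by (rule bspec)
    also have "\<dots> \<le> max C 0 * (SUP x. cmod (p n x))" using S0 by (intro mult_right_mono) auto
    also have "\<dots> \<le> max C 0 * c ^ Suc n" using S by (intro mult_left_mono) auto
    finally show ?thesis .
  qed
  then show ?thesis using pow_bound_lemma[OF norm_ge_zero c0] by blast
qed




lemma min_eq_scaled:
  assumes t: "t > 0" shows "min (y::real) t = t * min ((1/t) * y) 1"
proof (cases "y \<le> t")
  case True
  then have "(1/t) * y \<le> 1" using t by (simp add: divide_le_eq)
  then show ?thesis using True t by (simp add: min_def)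
next
  case False
  then have "\<not> (1/t) * y \<le> 1" using t by (simp add: divide_le_eq)
  then show ?thesis using False t by (simp add: min_def)
qed

lemma spec_pos:
  assumes adm: "admissible_B B" and phi: "\<phi> \<in> spectrum_A B" and kB: "k \<in> B"
    and k0: "\<And>x. 0 \<le> k x"
  shows "\<phi> (\<lambda>x. complex_of_real (k x)) \<in> \<real> \<and> 0 \<le> Re (\<phi> (\<lambda>x. complex_of_real (k x)))"
proof (rule ccontr)
  define z where "z = \<phi> (\<lambda>x. complex_of_real (k x))"
  assume "\<not> ?thesis"
  then have nz: "\<not> (z \<in> \<real> \<and> 0 \<le> Re z)" by (simp add: z_def)
  obtain M where M: "\<forall>x. \<bar>k x\<bar> \<le> M" using admD(4)[OF adm kB] by blast
  define v where "v t = (\<lambda>x. min (k x) t)" for t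
  define V where "V t = \<phi> (\<lambda>x. complex_of_real (v t x))" for t
  have vB: "v t \<in> B" if "t > 0" for t
  proof -
    have "v t = (\<lambda>x. t * min ((1/t) * k x) 1)" unfolding v_def using min_eq_scaled[OF that] by presburger
    also have "\<dots> \<in> B" by (intro admD(3)[OF adm] admD(8)[OF adm] kB)
    finally show ?thesis .
  qed
  have kA: "(\<lambda>x. complex_of_real (k x)) \<in> algA B" using ofreal_algA[OF adm kB] .
  have vA: "(\<lambda>x. complex_of_real (v t x)) \<in> algA B" if "t > 0" for t
    using ofreal_algA[OF adm vB[OF that]] .
  have F1: "(V t - of_real t) * (z - V t) = 0" if t: "t > 0" for t
  proof -
    define r where "r = (\<lambda>x. k x + (-1) * v t x)"
    have rB: "r \<in> B" unfolding r_def by (intro admD(2)[OF adm] admD(3)[OF adm] kB vB t)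
    have rA: "(\<lambda>x. complex_of_real (r x)) \<in> algA B" using ofreal_algA[OF adm rB] .
    have "(\<lambda>x. complex_of_real (k x)) = (\<lambda>x. complex_of_real (v t x) + complex_of_real (r x))"
      by (simp add: r_def)
    then have z1: "z = V t + \<phi> (\<lambda>x. complex_of_real (r x))"
      unfolding z_def V_def using specD(1)[OF phi vA[OF t] rA] by simp
    have "(\<lambda>x. complex_of_real (v t x) * complex_of_real (r x)) = (\<lambda>x. complex_of_real t * complex_of_real (r x))"
      by (rule ext) (simp add: r_def v_def min_def)
    then have "V t * \<phi> (\<lambda>x. complex_of_real (r x)) = of_real t * \<phi> (\<lambda>x. complex_of_real (r x))"
      unfolding V_def using specD(3)[OF phi vA[OF t] rA] specD(2)[OF phi rA] by auto
    then show ?thesis using z1 by (simp add: algebra_simps)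
  qed
  have F2: "cmod (V t - V s) \<le> \<bar>t - s\<bar>" if t: "t > 0" and s: "s > 0" for t s
  proof -
    define w where "w = (\<lambda>x. v t x + (-1) * v s x)"
    have wB: "w \<in> B" unfolding w_def by (intro admD(2)[OF adm] admD(3)[OF adm] vB t s)
    have wA: "(\<lambda>x. complex_of_real (w x)) \<in> algA B" using ofreal_algA[OF adm wB] .
    have "(\<lambda>x. complex_of_real (v t x)) = (\<lambda>x. complex_of_real (v s x) + complex_of_real (w x))"
      by (simp add: w_def)
    then have "V t = V s + \<phi> (\<lambda>x. complex_of_real (w x))"
      unfolding V_def using specD(1)[OF phi vA[OF s] wA] by simp
    moreover have "cmod (\<phi> (\<lambda>x. complex_of_real (w x))) \<le> \<bar>t - s\<bar>"
    proof (rule spec_bound[OF adm phi wA])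
      fix x
      have "\<bar>v t x - v s x\<bar> \<le> \<bar>t - s\<bar>" by (auto simp: v_def min_def abs_if)
      then show "cmod (complex_of_real (w x)) \<le> \<bar>t - s\<bar>" by (simp add: w_def del: of_real_diff)
    qed
    ultimately show ?thesis by simp
  qed
  have vb: "0 \<le> v t x \<and> v t x \<le> k x \<and> v t x \<le> t" if t: "t > 0" for t x
    using k0[of x] t by (simp add: v_def)
  have F3: "cmod (V t) \<le> M" if t: "t > 0" for t
  proof -
    have "cmod (complex_of_real (v t x)) \<le> M" for x
      using vb[OF t, of x] M[rule_format, of x] by simp
    then show ?thesis unfolding V_def by (rule spec_bound[OF adm phi vA[OF t]])
  qed
  have F4: "cmod (V t) \<le> t" if t: "t > 0" for t
  proof -
    have "cmod (complex_of_real (v t x)) \<le> t" for x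
      using vb[OF t, of x] by simp
    then show ?thesis unfolding V_def by (rule spec_bound[OF adm phi vA[OF t]])
  qed
  obtain d where d0: "d > 0" and d: "\<And>t. t \<ge> 0 \<Longrightarrow> d \<le> cmod (z - of_real t)"
  proof (cases "Im z = 0")
    case False
    show ?thesis
    proof (rule that[of "\<bar>Im z\<bar>"])
      show "\<bar>Im z\<bar> > 0" using False by simp
      fix t :: real
      show "\<bar>Im z\<bar> \<le> cmod (z - of_real t)" using abs_Im_le_cmod[of "z - of_real t"] by simp
    qed
  next
    case True
    then have "z \<in> \<real>" by (simp add: complex_is_Real_iff)
    then have zn: "Re z < 0" using nz by simp
    show ?thesis
    proof (rule that[of "- Re z"])
      show "- Re z > 0" using zn by simp
      fix t :: real assume "t \<ge> 0"
      then show "- Re z \<le> cmod (z - of_real t)" using abs_Re_le_cmod[of "z - of_real t"] by simp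
    qed
  qed
  define h where "h = d / 2"
  have h0: "h > 0" "h < d" using d0 by (auto simp: h_def)
  have claim: "V (real (Suc n) * h) = of_real (real (Suc n) * h)" for n
  proof (induction n)
    case 0
    have "V h = of_real h \<or> V h = z" using F1[OF h0(1)] by auto
    moreover have "V h \<noteq> z"
    proof
      assume "V h = z"
      then have "cmod z \<le> h" using F4[OF h0(1)] by simp
      moreover have "d \<le> cmod z" using d[of 0] by simp
      ultimately show False using h0 by simp
    qed
    ultimately show ?case by simp
  next
    case (Suc n)
    define t where "t = real (Suc n) * h"
    have t0: "t > 0" using h0 by (simp add: t_def)
    have tt: "real (Suc (Suc n)) * h = t + h" by (simp add: t_def algebra_simps)
    have "V (t + h) = of_real (t + h) \<or> V (t + h) = z" using F1[of "t+h"] t0 h0 by auto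
    moreover have "V (t + h) \<noteq> z"
    proof
      assume "V (t + h) = z"
      have f2: "cmod (V (t + h) - V t) \<le> \<bar>t + h - t\<bar>" using F2[of "t+h" t] t0 h0 by simp
      have vt: "V t = of_real t" using Suc by (simp add: t_def)
      from f2 vt \<open>V (t + h) = z\<close> have "cmod (z - of_real t) \<le> h" using h0 by simp
      moreover have "d \<le> cmod (z - of_real t)" using d[of t] t0 by simp
      ultimately show False using h0 by simp
    qed
    ultimately show ?case using tt by simp
  qed
  obtain n where n: "M / h < real n" using reals_Archimedean2 by blast
  have "M < real (Suc n) * h" using n h0 by (simp add: field_simps)
  moreover have "cmod (V (real (Suc n) * h)) \<le> M" using F3 h0 by simp
  moreover have "cmod (V (real (Suc n) * h)) = real (Suc n) * h"
  proof -
    have "cmod (V (real (Suc n) * h)) = \<bar>real (Suc n) * h\<bar>" by (simp only: claim[of n] norm_of_real)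
    then show ?thesis using h0 by simp
  qed
  ultimately show False by simp
qed




lemma cmap_cmult:
  fixes f g :: "'a \<Rightarrow> complex"
  shows "continuous_map X euclidean f \<Longrightarrow> continuous_map X euclidean g \<Longrightarrow> continuous_map X euclidean (\<lambda>x. f x * g x)"
  by (simp add: continuous_map_atin tendsto_mult)

lemma cmap_Re:
  fixes f :: "'a \<Rightarrow> complex"
  shows "continuous_map X euclidean f \<Longrightarrow> continuous_map X euclidean (\<lambda>x. Re (f x))"
  by (simp add: continuous_map_atin tendsto_Re)

lemma closedin_all:
  assumes "\<And>i. i \<in> I \<Longrightarrow> continuous_map X euclidean (F i)" "\<And>i. i \<in> I \<Longrightarrow> closed (C i)"
  shows "closedin X {x \<in> topspace X. \<forall>i\<in>I. F i x \<in> C i}"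
proof (cases "I = {}")
  case True then show ?thesis by simp
next
  case False
  have "{x \<in> topspace X. \<forall>i\<in>I. F i x \<in> C i} = \<Inter> ((\<lambda>i. {x \<in> topspace X. F i x \<in> C i}) ` I)"
    using False by auto
  also have "closedin X \<dots>"
    using False assms by (intro closedin_Inter) (auto intro!: closedin_continuous_map_preimage simp: closed_closedin[symmetric])
  finally show ?thesis .
qed

definition PT :: "('x \<Rightarrow> real) set \<Rightarrow> (('x \<Rightarrow> complex) \<Rightarrow> complex) topology" where
  "PT B = product_topology (\<lambda>_. euclidean) (algA B)"

lemma proj_cont: "continuous_map (PT B) euclidean (\<lambda>\<psi>. \<psi> b)"
proof (cases "b \<in> algA B")
  case True then show ?thesis unfolding PT_def using continuous_map_product_projection[OF True, of "\<lambda>_. euclidean"] by simp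
next
  case False
  have "continuous_map (PT B) euclidean (\<lambda>\<psi>. undefined)" by simp
  moreover have "\<psi> b = undefined" if "\<psi> \<in> topspace (PT B)" for \<psi>
  proof -
    have "\<psi> \<in> PiE (algA B) (\<lambda>_. UNIV)" using that unfolding PT_def by simp
    then show ?thesis using False by (rule PiE_arb)
  qed
  ultimately show ?thesis by (metis (no_types, lifting) continuous_map_eq)
qed

definition nrm :: "('x \<Rightarrow> complex) \<Rightarrow> real" where "nrm a = (SUP x. cmod (a x))"

lemma nrm_upper: "admissible_B B \<Longrightarrow> a \<in> algA B \<Longrightarrow> cmod (a x) \<le> nrm a"
proof -
  assume adm: "admissible_B B" and a: "a \<in> algA B"
  obtain M where M: "\<forall>x. cmod (a x) \<le> M" using algA_bounded[OF adm a] by blast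
  have "bdd_above (range (\<lambda>x. cmod (a x)))" by (rule bdd_aboveI2) (use M in blast)
  then show ?thesis unfolding nrm_def by (rule cSUP_upper[OF UNIV_I])
qed

lemma spec_topspace: "\<phi> \<in> spectrum_A B \<Longrightarrow> \<phi> \<in> topspace (PT B)"
proof -
  assume phi: "\<phi> \<in> spectrum_A B"
  have "\<phi> \<in> extensional (algA B)" unfolding extensional_def using specD(5)[OF phi] by blast
  then show ?thesis by (simp add: PT_def PiE_iff)
qed

lemma compact_supp:
  assumes adm: "admissible_B B" and vA: "v \<in> algA B" and t: "t > 0"
    and S: "S \<subseteq> {\<phi> \<in> spectrum_A B. t \<le> cmod (\<phi> v)}"
  shows "compactin (gelfand_top B) (gelfand_top B closure_of S)"
proof -
  let ?A = "algA B"
  define K1 where "K1 = {\<psi> \<in> topspace (PT B). \<forall>i\<in>?A\<times>?A. (\<lambda>\<psi>. \<psi> (\<lambda>x. fst i x + snd i x) - \<psi> (fst i) - \<psi> (snd i)) \<psi> \<in> (\<lambda>_. {0}) i}"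
  define K2 where "K2 = {\<psi> \<in> topspace (PT B). \<forall>i\<in>?A\<times>UNIV. (\<lambda>\<psi>. \<psi> (\<lambda>x. snd i * fst i x) - snd i * \<psi> (fst i)) \<psi> \<in> (\<lambda>_. {0}) i}"
  define K3 where "K3 = {\<psi> \<in> topspace (PT B). \<forall>i\<in>?A\<times>?A. (\<lambda>\<psi>. \<psi> (\<lambda>x. fst i x * snd i x) - \<psi> (fst i) * \<psi> (snd i)) \<psi> \<in> (\<lambda>_. {0}) i}"
  define K4 where "K4 = {\<psi> \<in> topspace (PT B). \<forall>a\<in>?A. (\<lambda>\<psi>. cmod (\<psi> a)) \<psi> \<in> {..nrm a}}"
  define K5 where "K5 = {\<psi> \<in> topspace (PT B). \<forall>a\<in>{v}. (\<lambda>\<psi>. cmod (\<psi> a)) \<psi> \<in> {t..}}"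
  define K where "K = K1 \<inter> K2 \<inter> K3 \<inter> K4 \<inter> K5"
  have c1: "closedin (PT B) K1" unfolding K1_def
    by (intro closedin_all continuous_map_diff proj_cont) auto
  have c2: "closedin (PT B) K2" unfolding K2_def
    by (intro closedin_all continuous_map_diff proj_cont cmap_cmult continuous_map_canonical_const) auto
  have c3: "closedin (PT B) K3" unfolding K3_def
    by (intro closedin_all continuous_map_diff proj_cont cmap_cmult) auto
  have c4: "closedin (PT B) K4" unfolding K4_def
    by (intro closedin_all continuous_map_norm proj_cont) auto
  have c5: "closedin (PT B) K5" unfolding K5_def
    by (intro closedin_all continuous_map_norm proj_cont) auto
  have cK: "closedin (PT B) K" unfolding K_def using c1 c2 c3 c4 c5 by (intro closedin_Int)
  have Ksub: "K \<subseteq> PiE ?A (\<lambda>a. cball 0 (nrm a))"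
    unfolding K_def K4_def PT_def by (auto simp: PiE_iff extensional_def)
  have cpt: "compactin (PT B) (PiE ?A (\<lambda>a. cball 0 (nrm a)))"
    unfolding PT_def compactin_PiE by auto
  have compK: "compactin (PT B) K" by (rule closed_compactin[OF cpt Ksub cK])
  have Kspec: "K \<subseteq> spectrum_A B"
  proof
    fix \<psi> assume "\<psi> \<in> K"
    then have p1: "\<psi> \<in> K1" "\<psi> \<in> K2" "\<psi> \<in> K3" "\<psi> \<in> K4" "\<psi> \<in> K5" by (auto simp: K_def)
    have ts: "\<psi> \<in> PiE ?A (\<lambda>_. UNIV)" using p1(1) unfolding K1_def PT_def by simp
    have ext: "\<forall>a. a \<notin> ?A \<longrightarrow> \<psi> a = undefined"
      using PiE_arb[OF ts] by blast
    have add: "\<forall>a\<in>?A. \<forall>b\<in>?A. \<psi> (\<lambda>x. a x + b x) = \<psi> a + \<psi> b"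
    proof (intro ballI)
      fix a b assume "a \<in> ?A" "b \<in> ?A"
      then have "(a, b) \<in> ?A \<times> ?A" by simp
      then have "\<psi> (\<lambda>x. a x + b x) - \<psi> a - \<psi> b \<in> {0}" using p1(1) unfolding K1_def by fastforce
      then show "\<psi> (\<lambda>x. a x + b x) = \<psi> a + \<psi> b" by (simp add: algebra_simps)
    qed
    have scal: "\<forall>a\<in>?A. \<forall>c::complex. \<psi> (\<lambda>x. c * a x) = c * \<psi> a"
    proof (intro ballI allI)
      fix a and c :: complex assume "a \<in> ?A"
      then have "(a, c) \<in> ?A \<times> UNIV" by simp
      then have "\<psi> (\<lambda>x. c * a x) - c * \<psi> a \<in> {0}" using p1(2) unfolding K2_def by fastforce
      then show "\<psi> (\<lambda>x. c * a x) = c * \<psi> a" by simp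
    qed
    have mult: "\<forall>a\<in>?A. \<forall>b\<in>?A. \<psi> (\<lambda>x. a x * b x) = \<psi> a * \<psi> b"
    proof (intro ballI)
      fix a b assume "a \<in> ?A" "b \<in> ?A"
      then have "(a, b) \<in> ?A \<times> ?A" by simp
      then have "\<psi> (\<lambda>x. a x * b x) - \<psi> a * \<psi> b \<in> {0}" using p1(3) unfolding K3_def by fastforce
      then show "\<psi> (\<lambda>x. a x * b x) = \<psi> a * \<psi> b" by simp
    qed
    have bd0: "\<forall>a\<in>?A. cmod (\<psi> a) \<le> nrm a" using p1(4) unfolding K4_def by simp
    have bd: "\<exists>C. \<forall>a\<in>?A. cmod (\<psi> a) \<le> C * (SUP x. cmod (a x))"
      by (rule exI[of _ 1]) (use bd0 in \<open>simp add: nrm_def\<close>)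
    have "t \<le> cmod (\<psi> v)" using p1(5) unfolding K5_def by simp
    then have nz: "\<exists>a\<in>?A. \<psi> a \<noteq> 0"
      using t vA by (intro bexI[of _ v]) auto
    show "\<psi> \<in> spectrum_A B" unfolding spectrum_A_def using ext add scal mult bd nz by blast
  qed
  have SK: "S \<subseteq> K"
  proof
    fix \<phi> assume "\<phi> \<in> S"
    then have phi: "\<phi> \<in> spectrum_A B" and tv: "t \<le> cmod (\<phi> v)" using S by auto
    have ts: "\<phi> \<in> topspace (PT B)" by (rule spec_topspace[OF phi])
    have "\<phi> \<in> K1" unfolding K1_def using ts specD(1)[OF phi] by auto
    moreover have "\<phi> \<in> K2" unfolding K2_def using ts specD(2)[OF phi] by auto
    moreover have "\<phi> \<in> K3" unfolding K3_def using ts specD(3)[OF phi] by auto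
    moreover have "\<phi> \<in> K4" unfolding K4_def using ts spec_bound[OF adm phi] nrm_upper[OF adm] by auto
    moreover have "\<phi> \<in> K5" unfolding K5_def using ts tv by auto
    ultimately show "\<phi> \<in> K" by (simp add: K_def)
  qed
  have cK': "closedin (gelfand_top B) K"
    unfolding gelfand_top_def closedin_subtopology using cK Kspec unfolding PT_def by blast
  have compK': "compactin (gelfand_top B) K"
    unfolding gelfand_top_def compactin_subtopology using compK Kspec unfolding PT_def by blast
  have "gelfand_top B closure_of S \<subseteq> K" by (rule closure_of_minimal[OF SK cK'])
  then show ?thesis by (rule closed_compactin[OF compK']) simp
qed

lemma cont_meas:
  fixes F :: "'a \<Rightarrow> real"
  assumes R: "radon_measure T \<nu>" and F: "continuous_map T euclidean F"
  shows "F \<in> borel_measurable \<nu>"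
proof (rule borel_measurableI)
  fix S :: "real set" assume "open S"
  have sp: "space \<nu> = topspace T" using R unfolding radon_measure_def by blast
  have st: "sets \<nu> = sets (borel_of_top T)" using R unfolding radon_measure_def by blast
  have oS: "openin euclidean S" using \<open>open S\<close> by (simp only: open_openin)
  have op: "openin T {x \<in> topspace T. F x \<in> S}"
    by (rule openin_continuous_map_preimage[OF F oS])
  have "sets (borel_of_top T) = sigma_sets (topspace T) {U. openin T U}"
    unfolding borel_of_top_def by (rule sets_measure_of) (auto dest: openin_subset)
  then have "{x \<in> topspace T. F x \<in> S} \<in> sets (borel_of_top T)" using op by (simp add: sigma_sets.Basic)
  moreover have "F -` S \<inter> space \<nu> = {x \<in> topspace T. F x \<in> S}" using sp by auto
  ultimately show "F -` S \<inter> space \<nu> \<in> sets \<nu>" using st by simp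
qed

lemma hat_cont: "continuous_map (gelfand_top B) euclidean (\<lambda>\<phi>. Re (\<phi> a))"
  unfolding gelfand_top_def
  by (intro continuous_map_from_subtopology cmap_Re) (use proj_cont[of B a] in \<open>simp add: PT_def\<close>)




lemma I_ext_B:
  assumes mu: "\<mu> \<in> D_B B" and gB: "g \<in> B" and g0: "\<And>x. 0 \<le> g x"
  shows "I_ext B \<mu> g = (\<integral>\<^sup>+ x. ennreal (g x) \<partial>\<mu>)"
  unfolding I_ext_def
proof (rule some_equality)
  have "incseq (\<lambda>n::nat. g)" by (simp add: incseq_def)
  then show "\<exists>fs. (\<forall>n. fs n \<in> B \<and> (\<forall>x. 0 \<le> fs n x)) \<and> incseq fs \<and> (\<forall>x. (\<lambda>n. fs n x) \<longlonglongrightarrow> g x)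
        \<and> (\<integral>\<^sup>+ x. ennreal (g x) \<partial>\<mu>) = (SUP n. \<integral>\<^sup>+ x. ennreal (fs n x) \<partial>\<mu>)"
    using gB g0 by (intro exI[of _ "\<lambda>n. g"]) auto
next
  fix r assume "\<exists>fs. (\<forall>n. fs n \<in> B \<and> (\<forall>x. 0 \<le> fs n x)) \<and> incseq fs \<and> (\<forall>x. (\<lambda>n. fs n x) \<longlonglongrightarrow> g x)
        \<and> r = (SUP n. \<integral>\<^sup>+ x. ennreal (fs n x) \<partial>\<mu>)"
  then obtain fs where fsB: "\<And>n. fs n \<in> B" and inc: "incseq fs" and lim: "\<And>x. (\<lambda>n. fs n x) \<longlonglongrightarrow> g x"
    and r: "r = (SUP n. \<integral>\<^sup>+ x. ennreal (fs n x) \<partial>\<mu>)" by blast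
  have meas: "fs n \<in> borel_measurable \<mu>" for n
    using mu fsB[of n] unfolding D_B_def by (auto intro: borel_measurable_integrable)
  define F where "F n x = ennreal (fs n x)" for n x
  have incF: "incseq F" using inc unfolding F_def incseq_def le_fun_def by (auto intro: ennreal_leI)
  have measF: "F n \<in> borel_measurable \<mu>" for n
    unfolding F_def using measurable_compose[OF meas[of n] measurable_ennreal] by simp
  have sup: "(SUP n. F n x) = ennreal (g x)" for x
  proof -
    have "incseq (\<lambda>n. F n x)" using incF unfolding incseq_def le_fun_def by auto
    then have "(\<lambda>n. F n x) \<longlonglongrightarrow> (SUP n. F n x)" by (rule LIMSEQ_SUP)
    moreover have "(\<lambda>n. F n x) \<longlonglongrightarrow> ennreal (g x)" unfolding F_def using lim[of x] by (rule tendsto_ennrealI)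
    ultimately show ?thesis using LIMSEQ_unique by blast
  qed
  have "(\<integral>\<^sup>+ x. (SUP n. F n x) \<partial>\<mu>) = (SUP n. integral\<^sup>N \<mu> (F n))"
    by (rule nn_integral_monotone_convergence_SUP[OF incF measF])
  then show "r = (\<integral>\<^sup>+ x. ennreal (g x) \<partial>\<mu>)" using r sup unfolding F_def by simp
qed

lemma minB:
  assumes adm: "admissible_B B" and kB: "k \<in> B" and t: "t > 0"
  shows "(\<lambda>x. min (k x) t) \<in> B" "(\<lambda>x. k x + (-1) * min (k x) t) \<in> B"
proof -
  have "(\<lambda>x. min (k x) t) = (\<lambda>x. t * min ((1/t) * k x) 1)" using min_eq_scaled[OF t] by presburger
  also have "\<dots> \<in> B" by (intro admD(3)[OF adm] admD(8)[OF adm] kB)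
  finally show m: "(\<lambda>x. min (k x) t) \<in> B" .
  show "(\<lambda>x. k x + (-1) * min (k x) t) \<in> B" by (intro admD(2)[OF adm] admD(3)[OF adm] kB m)
qed

lemma split_lemma:
  assumes adm: "admissible_B B" and phi: "\<phi> \<in> spectrum_A B" and kB: "k \<in> B" and t: "t > 0"
  shows "(\<phi> (\<lambda>x. of_real (min (k x) t)) - of_real t) * \<phi> (\<lambda>x. of_real (k x + (-1) * min (k x) t)) = 0"
    "\<phi> (\<lambda>x. of_real (k x)) = \<phi> (\<lambda>x. of_real (min (k x) t)) + \<phi> (\<lambda>x. of_real (k x + (-1) * min (k x) t))"
proof -
  define v where "v = (\<lambda>x. complex_of_real (min (k x) t))"
  define r where "r = (\<lambda>x. complex_of_real (k x + (-1) * min (k x) t))"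
  have vA: "v \<in> algA B" unfolding v_def by (rule ofreal_algA[OF adm minB(1)[OF adm kB t]])
  have rA: "r \<in> algA B" unfolding r_def by (rule ofreal_algA[OF adm minB(2)[OF adm kB t]])
  have "(\<lambda>x. complex_of_real (k x)) = (\<lambda>x. v x + r x)" by (simp add: v_def r_def)
  then show "\<phi> (\<lambda>x. of_real (k x)) = \<phi> (\<lambda>x. of_real (min (k x) t)) + \<phi> (\<lambda>x. of_real (k x + (-1) * min (k x) t))"
    using specD(1)[OF phi vA rA] by (simp add: v_def r_def)
  have "(\<lambda>x. v x * r x) = (\<lambda>x. complex_of_real t * r x)"
    by (rule ext) (simp add: r_def v_def min_def)
  then have "\<phi> v * \<phi> r = of_real t * \<phi> r"
    using specD(3)[OF phi vA rA] specD(2)[OF phi rA] by auto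
  then show "(\<phi> (\<lambda>x. of_real (min (k x) t)) - of_real t) * \<phi> (\<lambda>x. of_real (k x + (-1) * min (k x) t)) = 0"
    by (simp add: v_def r_def algebra_simps)
qed




lemma small_zero:
  fixes y :: real
  assumes "y \<ge> 0" "\<And>n::nat. y \<le> 1 / real (Suc n)"
  shows "y = 0"
proof (rule ccontr)
  assume "y \<noteq> 0"
  then have "y > 0" using assms(1) by simp
  then obtain n where n: "n > 0" "inverse (real n) < y" using ex_inverse_of_nat_less by blast
  then obtain m where m: "n = Suc m" using gr0_implies_Suc by blast
  show False using assms(2)[of m] n m by (simp add: inverse_eq_divide)
qed

theorem mainTheorem8:
  fixes B :: "('x \<Rightarrow> real) set" and \<mu> :: "'x measure"
    and \<nu> :: "(('x \<Rightarrow> complex) \<Rightarrow> complex) measure" and f :: "'x \<Rightarrow> real"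
  assumes "admissible_B B" and "vanishes_nowhere B"
    and "\<mu> \<in> D_B B" and "represents_hat B \<mu> \<nu>"
    and "f \<in> B"
  shows "(AE x in \<mu>. f x = 0) \<longleftrightarrow>
         (AE \<phi> in \<nu>. gelfand_hat (\<lambda>x. complex_of_real (f x)) \<phi> = 0)"
proof -
  note adm = assms(1) and mu = assms(3) and rep = assms(4) and fB = assms(5)
  define k where "k = (\<lambda>x. f x * f x)"
  have kB: "k \<in> B" unfolding k_def by (rule admD(5)[OF adm fB fB])
  have k0: "0 \<le> k x" for x by (simp add: k_def)
  define T :: "nat \<Rightarrow> real" where "T n = 1 / real (Suc n)" for n
  have T0: "T n > 0" for n by (simp add: T_def)
  define r where "r n = (\<lambda>x. k x + (-1) * min (k x) (T n))" for n
  define v where "v n = (\<lambda>x. min (k x) (T n))" for n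
  have rB: "r n \<in> B" for n unfolding r_def by (rule minB(2)[OF adm kB T0])
  have vB: "v n \<in> B" for n unfolding v_def by (rule minB(1)[OF adm kB T0])
  have r0: "0 \<le> r n x" for n x by (simp add: r_def min_def)
  have rz: "r n x = 0 \<longleftrightarrow> k x \<le> T n" for n x by (auto simp: r_def min_def)
  let ?rc = "\<lambda>n. (\<lambda>x. complex_of_real (r n x))"
  let ?vc = "\<lambda>n. (\<lambda>x. complex_of_real (v n x))"
  let ?kc = "\<lambda>x. complex_of_real (k x)"
  let ?fc = "\<lambda>x. complex_of_real (f x)"
  have fA: "?fc \<in> algA B" by (rule ofreal_algA[OF adm fB])
  have rA: "?rc n \<in> algA B" for n by (rule ofreal_algA[OF adm rB])
  have vA: "?vc n \<in> algA B" for n by (rule ofreal_algA[OF adm vB])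
  have pos: "\<phi> (?rc n) \<in> \<real> \<and> 0 \<le> Re (\<phi> (?rc n))" if "\<phi> \<in> spectrum_A B" for \<phi> n
    by (rule spec_pos[OF adm that rB r0])
  have S1: "(\<phi> (?vc n) - of_real (T n)) * \<phi> (?rc n) = 0" if "\<phi> \<in> spectrum_A B" for \<phi> n
    using split_lemma(1)[OF adm that kB T0[of n]] by (simp add: r_def v_def)
  have S2: "\<phi> ?kc = \<phi> (?vc n) + \<phi> (?rc n)" if "\<phi> \<in> spectrum_A B" for \<phi> n
    using split_lemma(2)[OF adm that kB T0[of n]] by (simp add: r_def v_def)
  have kf: "\<phi> ?kc = \<phi> ?fc * \<phi> ?fc" if "\<phi> \<in> spectrum_A B" for \<phi>
    using specD(3)[OF that fA fA] by (simp add: k_def)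
  have c: "\<phi> (?rc n) = 0" if phi: "\<phi> \<in> spectrum_A B" and z: "\<phi> ?fc = 0" for \<phi> n
  proof -
    have "\<phi> ?kc = 0" using kf[OF phi] z by simp
    then have vr: "\<phi> (?vc n) = - \<phi> (?rc n)" using S2[OF phi, of n] by (simp add: eq_neg_iff_add_eq_0)
    have "(- \<phi> (?rc n) - of_real (T n)) * \<phi> (?rc n) = 0" using S1[OF phi, of n] vr by simp
    then have "- \<phi> (?rc n) - of_real (T n) = 0 \<or> \<phi> (?rc n) = 0" by (simp only: mult_eq_0_iff)
    then have "\<phi> (?rc n) = 0 \<or> \<phi> (?rc n) = - of_real (T n)" by (metis add_diff_cancel_left' diff_0 diff_minus_eq_add diff_zero)
    moreover have "Re (- of_real (T n) :: complex) < 0" using T0[of n] by simp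
    ultimately show ?thesis using pos[OF phi, of n] by auto
  qed
  have d: "\<phi> ?fc = 0" if phi: "\<phi> \<in> spectrum_A B" and z: "\<forall>n. \<phi> (?rc n) = 0" for \<phi>
  proof -
    have "cmod (\<phi> ?kc) \<le> T n" for n
    proof -
      have "\<phi> ?kc = \<phi> (?vc n)" using S2[OF phi, of n] z by simp
      moreover have "cmod (\<phi> (?vc n)) \<le> T n"
        by (rule spec_bound[OF adm phi vA]) (use k0 T0[of n] in \<open>auto simp: v_def min_def\<close>)
      ultimately show ?thesis by simp
    qed
    then have "cmod (\<phi> ?kc) = 0" by (intro small_zero) (auto simp: T_def)
    then show ?thesis using kf[OF phi] by simp
  qed
  have hyp: "(\<forall>\<phi>\<in>spectrum_A B. gelfand_hat (?rc n) \<phi> \<in> \<real> \<and> 0 \<le> Re (gelfand_hat (?rc n) \<phi>))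
      \<and> compactin (gelfand_top B) (gelfand_top B closure_of {\<phi>\<in>spectrum_A B. gelfand_hat (?rc n) \<phi> \<noteq> 0})" for n
  proof
    show "\<forall>\<phi>\<in>spectrum_A B. gelfand_hat (?rc n) \<phi> \<in> \<real> \<and> 0 \<le> Re (gelfand_hat (?rc n) \<phi>)"
      using pos by (simp add: gelfand_hat_def)
    have "{\<phi>\<in>spectrum_A B. gelfand_hat (?rc n) \<phi> \<noteq> 0} \<subseteq> {\<phi> \<in> spectrum_A B. T n \<le> cmod (\<phi> (?vc n))}"
    proof safe
      fix \<phi> assume phi: "\<phi> \<in> spectrum_A B" and nz: "gelfand_hat (?rc n) \<phi> \<noteq> 0"
      then have "\<phi> (?vc n) = of_real (T n)" using S1[OF phi, of n] by (simp add: gelfand_hat_def)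
      then show "T n \<le> cmod (\<phi> (?vc n))" using T0[of n] by simp
    qed
    then show "compactin (gelfand_top B) (gelfand_top B closure_of {\<phi>\<in>spectrum_A B. gelfand_hat (?rc n) \<phi> \<noteq> 0})"
      by (rule compact_supp[OF adm vA T0])
  qed
  have radon: "radon_measure (gelfand_top B) \<nu>" using rep unfolding represents_hat_def by blast
  have sp0: "space \<nu> = topspace (gelfand_top B)" using radon unfolding radon_measure_def by blast
  have "topspace (gelfand_top B) = spectrum_A B"
    unfolding gelfand_top_def topspace_subtopology using spec_topspace[of _ B] unfolding PT_def by blast
  then have spnu: "space \<nu> = spectrum_A B" using sp0 by simp
  have integ: "(\<integral>\<^sup>+ \<phi>. ennreal (Re (\<phi> (?rc n))) \<partial>\<nu>) = (\<integral>\<^sup>+ x. ennreal (r n x) \<partial>\<mu>)" for n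
  proof -
    have "(\<integral>\<^sup>+ \<phi>. ennreal (Re (gelfand_hat (?rc n) \<phi>)) \<partial>\<nu>) = I_ext B \<mu> (\<lambda>x. Re (?rc n x))"
      using rep rA[of n] hyp[of n] unfolding represents_hat_def by blast
    also have "\<dots> = I_ext B \<mu> (r n)" by simp
    also have "\<dots> = (\<integral>\<^sup>+ x. ennreal (r n x) \<partial>\<mu>)" by (rule I_ext_B[OF mu rB r0])
    finally show ?thesis by (simp add: gelfand_hat_def)
  qed
  have measnu: "(\<lambda>\<phi>. ennreal (Re (\<phi> (?rc n)))) \<in> borel_measurable \<nu>" for n
    using measurable_compose[OF cont_meas[OF radon hat_cont] measurable_ennreal] by simp
  have measmu: "(\<lambda>x. ennreal (r n x)) \<in> borel_measurable \<mu>" for n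
  proof -
    have "r n \<in> borel_measurable \<mu>" using mu rB[of n] unfolding D_B_def by (auto intro: borel_measurable_integrable)
    then show ?thesis using measurable_compose[OF _ measurable_ennreal] by simp
  qed
  show ?thesis
  proof
    assume ae: "AE x in \<mu>. f x = 0"
    have "AE \<phi> in \<nu>. \<phi> (?rc n) = 0" for n
    proof -
      have "AE x in \<mu>. ennreal (r n x) = 0"
        using ae by eventually_elim (use T0[of n] in \<open>simp add: r_def k_def min_def\<close>)
      then have "(\<integral>\<^sup>+ x. ennreal (r n x) \<partial>\<mu>) = 0" by (simp add: nn_integral_0_iff_AE[OF measmu])
      then have "AE \<phi> in \<nu>. ennreal (Re (\<phi> (?rc n))) = 0" using integ[of n] nn_integral_0_iff_AE[OF measnu] by simp
      then show ?thesis using AE_space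
      proof eventually_elim
        case (elim \<phi>)
        then have phi: "\<phi> \<in> spectrum_A B" using spnu by simp
        have "Re (\<phi> (?rc n)) \<le> 0" using elim(1) ennreal_eq_0_iff by blast
        then have "Re (\<phi> (?rc n)) = 0" using pos[OF phi, of n] by simp
        moreover have "Im (\<phi> (?rc n)) = 0" using pos[OF phi, of n] by (simp add: complex_is_Real_iff)
        ultimately show ?case by (simp add: complex_eq_iff)
      qed
    qed
    then have "AE \<phi> in \<nu>. \<forall>n. \<phi> (?rc n) = 0" by (simp add: AE_all_countable)
    then show "AE \<phi> in \<nu>. gelfand_hat ?fc \<phi> = 0" using AE_space
    proof eventually_elim
      case (elim \<phi>)
      then show ?case using d[of \<phi>] spnu by (simp add: gelfand_hat_def)
    qed
  next
    assume ae: "AE \<phi> in \<nu>. gelfand_hat ?fc \<phi> = 0"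
    have "AE x in \<mu>. k x \<le> T n" for n
    proof -
      have "AE \<phi> in \<nu>. ennreal (Re (\<phi> (?rc n))) = 0" using ae AE_space
      proof eventually_elim
        case (elim \<phi>)
        then show ?case using c[of \<phi> n] spnu by (simp add: gelfand_hat_def)
      qed
      then have "(\<integral>\<^sup>+ \<phi>. ennreal (Re (\<phi> (?rc n))) \<partial>\<nu>) = 0" by (simp add: nn_integral_0_iff_AE[OF measnu])
      then have "AE x in \<mu>. ennreal (r n x) = 0" using integ[of n] nn_integral_0_iff_AE[OF measmu] by simp
      then show ?thesis
      proof eventually_elim
        case (elim x)
        then have "r n x \<le> 0" using ennreal_eq_0_iff by blast
        then have "r n x = 0" using r0[of n x] by simp
        then show ?case using rz by simp
      qed
    qed
    then have "AE x in \<mu>. \<forall>n. k x \<le> T n" by (simp add: AE_all_countable)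
    then show "AE x in \<mu>. f x = 0"
    proof eventually_elim
      case (elim x)
      then have "k x = 0" by (intro small_zero k0) (simp add: T_def)
      then show ?case by (simp add: k_def)
    qed
  qed
qed


end
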